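(* (i) Every positive integer $N\equiv 1\pmod 8$ can be written as $N=x^2+P$ with $x$ a nonnegative integer and $P$ a practical number. (ii) For every $j\in\{0,2,3,4,5,6,7\}$ there exist infinitely many nonnegative integers $k$ such that $8k+j$ cannot be written as $x^2+P$ with $x$ a nonnegative integer and $P$ a practical number.
   Context: A positive integer $N$ is called a practical number if every integer in $[1,N]$ can be expressed as a sum of distinct positive divisors of $N$. *)

theory Defs
  imports Main
begin

definition practical :: "nat \<Rightarrow> bool" where
  "practical N \<longleftrightarrow> N > 0 \<and>
     (\<forall>m\<in>{1..N}. \<exists>S. S \<subseteq> {d. d > 0 \<and> d dvd N} \<and> \<Sum>S = m)"

end

theory Submission
  imports Defs
begin


lemma prac_pos: "practical P \<Longrightarrow> 0 < P" by (simp add: practical_def)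

lemma prac_bound:
  assumes "practical P" "q \<le> P" "1 \<le> q" "finite D" "\<And>d. d \<in> {1..q} \<Longrightarrow> d dvd P \<Longrightarrow> d \<in> D"
  shows "q \<le> \<Sum>D"
proof -
  have P0: "0 < P" using assms(1) prac_pos by blast
  have "q \<in> {1..P}" using assms(2,3) by simp
  then obtain S where S: "S \<subseteq> {d. d > 0 \<and> d dvd P}" "\<Sum>S = q"
    using assms(1) unfolding practical_def by blast
  have "S \<subseteq> {..P}" using S(1) P0 by (auto intro: dvd_imp_le)
  hence fS: "finite S" using finite_subset by blast
  have "S \<subseteq> D"
  proof
    fix d assume d: "d \<in> S"
    have "d \<le> \<Sum>S" using member_le_sum[of d S id] fS d by simp
    thus "d \<in> D" using S d assms(5)[of d] by auto
  qed
  thus ?thesis using S(2) sum_mono2[OF assms(4), of S id] by simp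
qed

lemma enum16: "1 \<le> (d::nat) \<Longrightarrow> d \<le> 16 \<Longrightarrow> d=1 \<or> d=2 \<or> d=3 \<or> d=4 \<or> d=5 \<or> d=6 \<or> d=7 \<or> d=8 \<or> d=9 \<or> d=10 \<or> d=11 \<or> d=12 \<or> d=13 \<or> d=14 \<or> d=15 \<or> d=16"
  by (simp add: le_Suc_eq numeral_eq_Suc)

lemma lt3: "(r::nat) < 3 \<Longrightarrow> r = 0 \<or> r = 1 \<or> r = 2"
  by (simp add: less_Suc_eq numeral_eq_Suc)

lemma lt5: "(r::nat) < 5 \<Longrightarrow> r = 0 \<or> r = 1 \<or> r = 2 \<or> r = 3 \<or> r = 4"
  by (simp add: less_Suc_eq numeral_eq_Suc)

lemma lt7: "(r::nat) < 7 \<Longrightarrow> r = 0 \<or> r = 1 \<or> r = 2 \<or> r = 3 \<or> r = 4 \<or> r = 5 \<or> r = 6"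
  by (simp add: less_Suc_eq numeral_eq_Suc)

lemma lt11: "(r::nat) < 11 \<Longrightarrow> r = 0 \<or> r = 1 \<or> r = 2 \<or> r = 3 \<or> r = 4 \<or> r = 5 \<or> r = 6 \<or> r = 7 \<or> r = 8 \<or> r = 9 \<or> r = 10"
  by (simp add: less_Suc_eq numeral_eq_Suc)

lemma lt13: "(r::nat) < 13 \<Longrightarrow> r = 0 \<or> r = 1 \<or> r = 2 \<or> r = 3 \<or> r = 4 \<or> r = 5 \<or> r = 6 \<or> r = 7 \<or> r = 8 \<or> r = 9 \<or> r = 10 \<or> r = 11 \<or> r = 12"
  by (simp add: less_Suc_eq numeral_eq_Suc)

lemma lt16: "(r::nat) < 16 \<Longrightarrow> r = 0 \<or> r = 1 \<or> r = 2 \<or> r = 3 \<or> r = 4 \<or> r = 5 \<or> r = 6 \<or> r = 7 \<or> r = 8 \<or> r = 9 \<or> r = 10 \<or> r = 11 \<or> r = 12 \<or> r = 13 \<or> r = 14 \<or> r = 15"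
  by (simp add: less_Suc_eq numeral_eq_Suc)

lemma sq_res:
  fixes x :: nat
  shows "x^2 mod 3 \<in> {0,1}" "x^2 mod 5 \<in> {0,1,4}" "x^2 mod 7 \<in> {0,1,2,4}"
    "x^2 mod 11 \<in> {0,1,3,4,5,9}" "x^2 mod 13 \<in> {0,1,3,4,9,10,12}" "x^2 mod 16 \<in> {0,1,4,9}"
proof -
  have e: "x^2 mod m = (x mod m)^2 mod m" for m by (simp add: power_mod)
  have l3: "x mod 3 < 3" and l5: "x mod 5 < 5" and l7: "x mod 7 < 7" and l11: "x mod 11 < 11"
    and l13: "x mod 13 < 13" and l16: "x mod 16 < 16" by simp_all
  have a3: "x mod 3 = 0 \<or> x mod 3 = 1 \<or> x mod 3 = 2" using lt3[OF l3] .
  have a5: "x mod 5 = 0 \<or> x mod 5 = 1 \<or> x mod 5 = 2 \<or> x mod 5 = 3 \<or> x mod 5 = 4" using lt5[OF l5] .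
  have a7: "x mod 7 = 0 \<or> x mod 7 = 1 \<or> x mod 7 = 2 \<or> x mod 7 = 3 \<or> x mod 7 = 4 \<or> x mod 7 = 5 \<or> x mod 7 = 6" using lt7[OF l7] .
  have a11: "x mod 11 = 0 \<or> x mod 11 = 1 \<or> x mod 11 = 2 \<or> x mod 11 = 3 \<or> x mod 11 = 4 \<or> x mod 11 = 5 \<or> x mod 11 = 6 \<or> x mod 11 = 7 \<or> x mod 11 = 8 \<or> x mod 11 = 9 \<or> x mod 11 = 10" using lt11[OF l11] .
  have a13: "x mod 13 = 0 \<or> x mod 13 = 1 \<or> x mod 13 = 2 \<or> x mod 13 = 3 \<or> x mod 13 = 4 \<or> x mod 13 = 5 \<or> x mod 13 = 6 \<or> x mod 13 = 7 \<or> x mod 13 = 8 \<or> x mod 13 = 9 \<or> x mod 13 = 10 \<or> x mod 13 = 11 \<or> x mod 13 = 12" using lt13[OF l13] .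
  have a16: "x mod 16 = 0 \<or> x mod 16 = 1 \<or> x mod 16 = 2 \<or> x mod 16 = 3 \<or> x mod 16 = 4 \<or> x mod 16 = 5 \<or> x mod 16 = 6 \<or> x mod 16 = 7 \<or> x mod 16 = 8 \<or> x mod 16 = 9 \<or> x mod 16 = 10 \<or> x mod 16 = 11 \<or> x mod 16 = 12 \<or> x mod 16 = 13 \<or> x mod 16 = 14 \<or> x mod 16 = 15" using lt16[OF l16] .
  show "x^2 mod 3 \<in> {0,1}" using a3 e[of 3] by auto
  show "x^2 mod 5 \<in> {0,1,4}" using a5 e[of 5] by auto
  show "x^2 mod 7 \<in> {0,1,2,4}" using a7 e[of 7] by auto
  show "x^2 mod 11 \<in> {0,1,3,4,5,9}" using a11 e[of 11] by auto
  show "x^2 mod 13 \<in> {0,1,3,4,9,10,12}" using a13 e[of 13] by auto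
  show "x^2 mod 16 \<in> {0,1,4,9}" using a16 e[of 16] by auto
qed

lemma small_div:
  fixes d P :: nat
  assumes "d dvd P" "1 \<le> d" "d \<le> 16" "\<not> 3 dvd P" "\<not> 5 dvd P" "\<not> 7 dvd P" "\<not> 11 dvd P" "\<not> 13 dvd P"
  shows "d \<in> {1,2,4,8,16}"
proof -
  have t: "k dvd d \<Longrightarrow> k dvd P" for k using assms(1) dvd_trans by blast
  from enum16[OF assms(2,3)] show ?thesis
    using t[of 3] t[of 5] t[of 7] t[of 11] t[of 13] assms(4-8)
    by (elim disjE) simp_all
qed

lemma nonrep:
  fixes n x P :: nat
  assumes pr: "practical P" and nx: "n = x^2 + P" and c16: "n mod 16 \<notin> {0,1,4,9}"
    and c3: "n mod 3 = 2" and c5: "n mod 5 = 2" and c7: "n mod 7 = 3" and c11: "n mod 11 = 10"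
    and c13: "n mod 13 = 7"
  shows False
proof -
  have m: "(x^2 mod p + P mod p) mod p = n mod p" for p by (simp add: nx mod_add_eq)
  note sq = sq_res[of x]
  have n3: "\<not> 3 dvd P" using m[of 3] c3 sq(1) by auto
  have n5: "\<not> 5 dvd P" using m[of 5] c5 sq(2) by auto
  have n7: "\<not> 7 dvd P" using m[of 7] c7 sq(3) by auto
  have n11: "\<not> 11 dvd P" using m[of 11] c11 sq(4) by auto
  have n13: "\<not> 13 dvd P" using m[of 13] c13 sq(5) by auto
  have p1: "P \<noteq> 1" using m[of 13] c13 sq(5) by auto
  have p2: "P \<noteq> 2" using m[of 13] c13 sq(5) by auto
  have p4: "P \<noteq> 4" using m[of 11] c11 sq(4) by auto
  have p8: "P \<noteq> 8" using m[of 11] c11 sq(4) by auto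
  have p16: "P mod 16 \<noteq> 0"
  proof
    assume "P mod 16 = 0"
    thus False using m[of 16] c16 sq(6) by auto
  qed
  have P0: "0 < P" using pr prac_pos by blast
  have q2: "P mod 2 = (P mod 16) mod 2" and q4: "P mod 4 = (P mod 16) mod 4" and q8: "P mod 8 = (P mod 16) mod 8"
    by (simp_all add: mod_mod_cancel)
  have "P mod 2 = 1 \<or> P mod 4 = 2 \<or> P mod 8 = 4 \<or> P mod 16 = 8"
    using lt16[of "P mod 16"] p16 unfolding q2 q4 q8 by auto
  hence "odd P \<or> P mod 4 = 2 \<or> P mod 8 = 4 \<or> P mod 16 = 8" by (simp add: odd_iff_mod_2_eq_one)
  moreover {
    assume h: "odd P"
    have "2 \<le> \<Sum>{1::nat}"
    proof (rule prac_bound[OF pr])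
      show "2 \<le> P" using h p1 P0 by presburger
      fix d assume d: "d \<in> {1..2}" "d dvd P"
      have "d \<noteq> 2" using h d(2) by auto
      thus "d \<in> {1}" using d(1) by auto
    qed auto
    hence False by simp
  } moreover {
    assume h: "P mod 4 = 2"
    have "4 \<le> \<Sum>{1::nat,2}"
    proof (rule prac_bound[OF pr])
      show "4 \<le> P" using h p2 by presburger
      fix d assume "d \<in> {1..4}" "d dvd P"
      hence "d \<in> {1,2,4,8,16}" using small_div[of d P] n3 n5 n7 n11 n13 by auto
      moreover have "\<not> 4 dvd P" using h by presburger
      ultimately show "d \<in> {1,2}" using \<open>d \<in> {1..4}\<close> \<open>d dvd P\<close> by auto
    qed auto
    hence False by simp
  } moreover {
    assume h: "P mod 8 = 4"
    have "8 \<le> \<Sum>{1::nat,2,4}"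
    proof (rule prac_bound[OF pr])
      show "8 \<le> P" using h p4 by presburger
      fix d assume "d \<in> {1..8}" "d dvd P"
      hence "d \<in> {1,2,4,8,16}" using small_div[of d P] n3 n5 n7 n11 n13 by auto
      moreover have "\<not> 8 dvd P" using h by presburger
      ultimately show "d \<in> {1,2,4}" using \<open>d \<in> {1..8}\<close> \<open>d dvd P\<close> by auto
    qed auto
    hence False by simp
  } moreover {
    assume h: "P mod 16 = 8"
    have "16 \<le> \<Sum>{1::nat,2,4,8}"
    proof (rule prac_bound[OF pr])
      show "16 \<le> P" using h p8 by presburger
      fix d assume "d \<in> {1..16}" "d dvd P"
      hence "d \<in> {1,2,4,8,16}" using small_div[of d P] n3 n5 n7 n11 n13 by auto
      moreover have "\<not> 16 dvd P" using h by presburger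
      ultimately show "d \<in> {1,2,4,8}" using \<open>d dvd P\<close> by auto
    qed auto
    hence False by simp
  }
  ultimately show False by blast
qed



definition rep :: "nat set \<Rightarrow> nat \<Rightarrow> bool" where
  "rep X n \<longleftrightarrow> (\<exists>S\<subseteq>X. finite S \<and> \<Sum>S = n)"

lemma rep_mono: "rep X n \<Longrightarrow> X \<subseteq> Y \<Longrightarrow> rep Y n"
  unfolding rep_def by blast

lemma rep_step:
  assumes all: "\<forall>n\<le>s. rep X n" and dX: "d \<notin> X" and ds: "d \<le> s + 1"
  shows "\<forall>n\<le>s + d. rep (insert d X) n"
proof (intro allI impI)
  fix n assume n: "n \<le> s + d"
  show "rep (insert d X) n"
  proof (cases "n \<le> s")
    case True thus ?thesis using all rep_mono by blast
  next
    case False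
    hence "n - d \<le> s" "d \<le> n" using n ds by auto
    then obtain S where S: "S \<subseteq> X" "finite S" "\<Sum>S = n - d" using all unfolding rep_def by blast
    have "d \<notin> S" using S dX by blast
    hence "\<Sum>(insert d S) = n" using S \<open>d \<le> n\<close> by simp
    thus ?thesis unfolding rep_def using S by (intro exI[of _ "insert d S"]) auto
  qed
qed

lemma rep_pow: "\<forall>n<2^a. rep ((\<lambda>i. 2^i) ` {..<a}) n"
proof (induction a)
  case 0
  show ?case unfolding rep_def by (auto intro: exI[of _ "{}"])
next
  case (Suc a)
  have "2^a \<notin> (\<lambda>i. (2::nat)^i) ` {..<a}" by auto
  moreover have p: "(0::nat) < 2^a" by simp
  moreover have "\<forall>n\<le>2^a - 1. rep ((\<lambda>i. 2^i) ` {..<a}) n"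
  proof (intro allI impI)
    fix n assume "n \<le> (2::nat)^a - 1"
    hence "n < 2^a" using p by linarith
    thus "rep ((\<lambda>i. 2^i) ` {..<a}) n" using Suc.IH by blast
  qed
  ultimately have "\<forall>n\<le>2 ^ a - 1 + 2 ^ a. rep (insert (2 ^ a) ((\<lambda>i. 2 ^ i) ` {..<a})) n"
    using rep_step[of "2^a - 1" _ "2^a"] by simp
  moreover have "insert (2 ^ a) ((\<lambda>i. 2 ^ i) ` {..<a}) = (\<lambda>i. (2::nat) ^ i) ` {..<Suc a}"
    by (auto simp: lessThan_Suc)
  ultimately show ?case by auto
qed

lemma rep_mix:
  assumes m: "odd m" "1 < m" "m \<le> 2^(a+1)"
  shows "\<forall>n \<le> 2^(a+1) - 1 + m*(2^k - 1). rep ((\<lambda>i. 2^i) ` {..<a+1} \<union> (\<lambda>i. m*2^i) ` {..<k}) n"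
proof (induction k)
  case 0
  show ?case
  proof (intro allI impI)
    fix n assume "n \<le> 2^(a+1) - 1 + m*(2^0 - 1)"
    hence "n \<le> 2*2^a - 1" by simp
    moreover have "(0::nat) < 2^a" by simp
    ultimately have "n < 2*2^a" by linarith
    hence "n < 2^(a+1)" by simp
    thus "rep ((\<lambda>i. 2^i) ` {..<a+1} \<union> (\<lambda>i. m*2^i) ` {..<0}) n" using rep_pow[of "a+1"] by simp
  qed
next
  case (Suc k)
  let ?X = "(\<lambda>i. 2^i) ` {..<a+1} \<union> (\<lambda>i. m*2^i) ` {..<k}"
  have nd: "m*2^k \<notin> ?X"
  proof
    assume "m*2^k \<in> ?X"
    then consider i where "m*2^k = 2^i" | i where "i < k" "m*2^k = m*2^i" by auto
    thus False
    proof cases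
      case 1
      hence "m dvd 2^i" by (metis dvd_triv_left)
      moreover have "coprime m (2^i)" using m(1) by simp
      ultimately have "m dvd 1" using coprime_absorb_left by blast
      thus False using m(2) by simp
    next
      case 2 thus False using m(2) by simp
    qed
  qed
  have le: "m*2^k \<le> 2^(a+1) - 1 + m*(2^k - 1) + 1"
  proof -
    have "m*(2^k - 1) = m*2^k - m" by (simp add: right_diff_distrib')
    moreover have "m \<le> m*2^k" by simp
    moreover have "(1::nat) \<le> 2^(a+1)" by simp
    ultimately show ?thesis using m(3) by linarith
  qed
  from rep_step[OF Suc.IH nd le]
  have "\<forall>n\<le>2^(a+1) - 1 + m*(2^k - 1) + m*2^k. rep (insert (m*2^k) ?X) n" .
  moreover have "2^(a+1) - 1 + m*(2^k - 1) + m*2^k = 2^(a+1) - 1 + m*(2^Suc k - 1)"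
  proof -
    have "(1::nat) \<le> 2^k" by simp
    hence "m*(2^k - 1) + m*2^k = m*(2^Suc k - 1)"
      by (simp add: algebra_simps right_diff_distrib' mult_2)
    moreover have "(1::nat) \<le> 2^(a+1)" by simp
    ultimately show ?thesis by linarith
  qed
  moreover have "insert (m*2^k) ?X = (\<lambda>i. 2^i) ` {..<a+1} \<union> (\<lambda>i. m*2^i) ` {..<Suc k}"
    by (auto simp: lessThan_Suc)
  ultimately show ?case by metis
qed

lemma prac_odd:
  assumes m: "odd m" "1 \<le> m" "m \<le> 2^(a+1)"
  shows "practical (2^a * m)"
proof -
  let ?N = "2^a * m"
  have "\<exists>X. X \<subseteq> {d. d > 0 \<and> d dvd ?N} \<and> (\<forall>n\<le>?N. rep X n)"
  proof (cases "m = 1")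
    case True
    have "(\<lambda>i. 2^i) ` {..<a+1} \<subseteq> {d. d > 0 \<and> d dvd ?N}"
      using True by (auto simp: le_imp_power_dvd)
    moreover have "\<forall>n\<le>?N. rep ((\<lambda>i. 2^i) ` {..<a+1}) n"
    proof (intro allI impI)
      fix n assume "n \<le> ?N"
      hence "n \<le> 2^a" using True by simp
      moreover have "(0::nat) < 2^a" by simp
      ultimately have "n < 2*2^a" by linarith
      hence "n < 2^(a+1)" by simp
      thus "rep ((\<lambda>i. 2^i) ` {..<a+1}) n" using rep_pow[of "a+1"] by blast
    qed
    ultimately show ?thesis by blast
  next
    case False
    hence m1: "1 < m" using m by simp
    let ?X = "(\<lambda>i. 2^i) ` {..<a+1} \<union> (\<lambda>i. m*2^i) ` {..<a+1}"
    have "?X \<subseteq> {d. d > 0 \<and> d dvd ?N}"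
    proof -
      have "2^i dvd ?N" if "i < a+1" for i
        using that by (simp add: dvd_mult2 le_imp_power_dvd)
      moreover have "m*2^i dvd ?N" if "i < a+1" for i
        using that by (simp add: le_imp_power_dvd mult.commute)
      ultimately show ?thesis using m by auto
    qed
    moreover have "\<forall>n\<le>?N. rep ?X n"
    proof -
      have "?N \<le> 2^(a+1) - 1 + m*(2^(a+1) - 1)"
      proof -
        have "m*(2^(a+1) - 1) = m*2^(a+1) - m" by (simp add: right_diff_distrib')
        moreover have "m*2^(a+1) = 2*(2^a*m)" by simp
        moreover have "(1::nat) \<le> 2^(a+1)" by simp
        ultimately show ?thesis using m(3) by linarith
      qed
      thus ?thesis using rep_mix[OF m(1) m1 m(3), of "a+1"] by auto
    qed
    ultimately show ?thesis by blast
  qed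
  then obtain X where X: "X \<subseteq> {d. d > 0 \<and> d dvd ?N}" "\<forall>n\<le>?N. rep X n" by blast
  show ?thesis unfolding practical_def
  proof (intro conjI ballI)
    show "0 < ?N" using m by simp
    fix n assume "n \<in> {1..?N}"
    then obtain S where "S \<subseteq> X" "\<Sum>S = n" using X(2) unfolding rep_def by auto
    thus "\<exists>S. S \<subseteq> {d. d > 0 \<and> d dvd ?N} \<and> \<Sum>S = n" using X(1) by blast
  qed
qed

lemma odd_decomp: "0 < (n::nat) \<Longrightarrow> \<exists>b m. odd m \<and> n = 2^b * m"
proof (induction n rule: less_induct)
  case (less n)
  show ?case
  proof (cases "odd n")
    case True thus ?thesis by (intro exI[of _ 0] exI[of _ n]) simp
  next
    case False
    then obtain k where k: "n = 2*k" by blast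
    hence "0 < k" "k < n" using less.prems by auto
    then obtain b m where "odd m" "k = 2^b*m" using less.IH by blast
    thus ?thesis using k by (intro exI[of _ "Suc b"] exI[of _ m]) simp
  qed
qed

lemma prac_gen:
  assumes "0 < P" "2^a dvd P" "P \<le> 2^(2*a+1)"
  shows "practical P"
proof -
  obtain b m where bm: "odd m" "P = 2^b * m" using odd_decomp assms(1) by blast
  have ab: "a \<le> b"
  proof (rule ccontr)
    assume "\<not> a \<le> b"
    hence "b+1 \<le> a" by simp
    hence "(2::nat)^(b+1) dvd 2^a" by (rule le_imp_power_dvd)
    hence "2^(b+1) dvd P" using assms(2) by (rule dvd_trans)
    hence "2^b*2 dvd 2^b*m" using bm by simp
    hence "2 dvd m" by (simp del: mult_cancel_left)
    thus False using bm by simp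
  qed
  have "m \<le> 2^(b+1)"
  proof -
    have "2^b * m \<le> 2^(2*a+1)" using assms(3) bm by simp
    also have "\<dots> \<le> 2^b * 2^(b+1)"
    proof -
      have "2^(2*a+1) = (2::nat)^(a + (a+1))" by (simp add: mult_2)
      also have "\<dots> \<le> 2^(b + (b+1))" using ab by (intro power_increasing) auto
      finally show ?thesis by (simp add: power_add)
    qed
    finally show ?thesis by simp
  qed
  moreover have "1 \<le> m" using bm by (cases m) auto
  ultimately show ?thesis using prac_odd[of m b] bm by simp
qed

lemma sqrt2: "N mod 8 = 1 \<Longrightarrow> \<exists>x::nat. odd x \<and> (2::int)^a dvd (int N - int x^2)"
proof (induction a)
  case 0 show ?case by (intro exI[of _ 1]) simp
next
  case (Suc a)
  have "int N = int (8*(N div 8) + N mod 8)" by simp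
  also have "\<dots> = 8*int (N div 8) + 1" using Suc.prems by simp
  finally have "int N - 1 = 8*int (N div 8)" by simp
  hence N8: "(8::int) dvd int N - 1" by simp
  show ?case
  proof (cases "a < 3")
    case True
    hence "(2::int)^Suc a dvd 2^3" by (intro le_imp_power_dvd) simp
    hence "(2::int)^Suc a dvd 8" by simp
    hence "(2::int)^Suc a dvd int N - 1" using N8 by (rule dvd_trans)
    thus ?thesis by (intro exI[of _ 1]) simp
  next
    case False
    hence "3 \<le> a" by simp
    hence "a = Suc (Suc (a - 2)) \<and> 1 \<le> a - 2" by arith
    then obtain b where ab: "a = Suc (Suc b)" "1 \<le> b" by blast
    from Suc.IH[OF Suc.prems] obtain x where x: "odd x" "(2::int)^a dvd (int N - int x^2)" by blast
    then obtain c where c: "int N - int x^2 = 2^a * c" by blast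
    show ?thesis
    proof (cases "even c")
      case True
      then obtain c' where "c = 2*c'" by blast
      hence "int N - int x^2 = 2^Suc a * c'" using c by simp
      thus ?thesis using x(1) by (intro exI[of _ x]) simp
    next
      case False
      let ?y = "x + 2^Suc b"
      have "odd ?y" using x(1) by simp
      moreover have "(2::int)^Suc a dvd int N - int ?y^2"
      proof -
        have "int ?y^2 = int x^2 + 4*2^b*int x + 4*2^b*2^b" by (simp add: power2_eq_square algebra_simps)
        hence e: "int N - int ?y^2 = 4*2^b*(c - int x) - 4*2^b*2^b" using c ab by (simp add: algebra_simps)
        have "odd (int x)" using x(1) by simp
        hence "even (c - int x)" using False by simp
        then obtain u where u: "c - int x = 2*u" by blast
        have "even ((2::int)^b)" using ab by simp
        then obtain v where v: "(2::int)^b = 2*v" by blast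
        have "int N - int ?y^2 = 8*2^b*(u - v)" using e u v by (simp add: algebra_simps)
        moreover have "(2::int)^Suc a = 8*2^b" using ab by simp
        ultimately show ?thesis by simp
      qed
      ultimately show ?thesis by blast
    qed
  qed
qed

lemma reduce2:
  assumes "(2::int)^(b+2) dvd (int N - int x^2)"
  shows "\<exists>y::nat. y < 2^(b+1) \<and> (2::int)^(b+2) dvd (int N - int y^2)"
proof -
  let ?y = "x mod 2^(b+1)"
  let ?q = "x div 2^(b+1)"
  have xn: "x = ?y + ?q * 2^(b+1)" using mod_div_mult_eq[of x "2^(b+1)"] by simp
  have "int x = int (?y + ?q * 2^(b+1))" using arg_cong[OF xn, of int] .
  also have "\<dots> = int ?y + int ?q * 2^(b+1)" by simp
  finally have xe: "int x = int ?y + int ?q * 2^(b+1)" .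
  have "int x^2 - int ?y^2 = 2^(b+2) * (int ?y * int ?q + int ?q^2 * 2^b)"
    by (simp add: xe power2_eq_square algebra_simps power_add)
  hence "(2::int)^(b+2) dvd int x^2 - int ?y^2" by simp
  hence "(2::int)^(b+2) dvd (int N - int x^2) + (int x^2 - int ?y^2)" using assms by (rule dvd_add[rotated])
  hence "(2::int)^(b+2) dvd int N - int ?y^2" by simp
  moreover have "?y < 2^(b+1)" by simp
  ultimately show ?thesis by blast
qed

lemma part1:
  assumes "0 < N" "N mod 8 = 1"
  shows "\<exists>x P. practical P \<and> N = x^2 + P"
proof (cases "N = 1")
  case True
  have "practical (2^0*1)" by (rule prac_odd) auto
  thus ?thesis using True by (intro exI[of _ 0] exI[of _ 1]) simp
next
  case False
  hence N9: "9 \<le> N" using assms by presburger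
  define a where "a = (LEAST a. N \<le> 4^a)"
  have ex: "N \<le> 4^N"
  proof -
    have "N < 2^N" by (rule less_exp)
    also have "\<dots> \<le> 4^N" by (rule power_mono) auto
    finally show ?thesis by simp
  qed
  have Na: "N \<le> 4^a" unfolding a_def by (rule LeastI[of _ N]) (rule ex)
  have a2: "2 \<le> a"
  proof (rule ccontr)
    assume "\<not> 2 \<le> a"
    hence "a = 0 \<or> a = 1" by auto
    thus False using Na N9 by auto
  qed
  then obtain b where b: "a = Suc (Suc b)" by (metis add_2_eq_Suc le_Suc_ex)
  have lt: "\<not> N \<le> 4^(Suc b)" unfolding a_def
    by (rule not_less_Least) (simp add: b[unfolded a_def])
  from sqrt2[OF assms(2), of "b+2"] obtain x where "(2::int)^(b+2) dvd (int N - int x^2)" by blast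
  from reduce2[OF this] obtain y where y: "y < 2^(b+1)" "(2::int)^(b+2) dvd (int N - int y^2)" by blast
  have "y^2 < (2^(b+1))^2" using y(1) by (rule power_strict_mono) auto
  also have "\<dots> = 4^(Suc b)" by (simp add: power2_eq_square power_mult_distrib[symmetric])
  finally have yN: "y^2 < N" using lt by simp
  define P where "P = N - y^2"
  have NP: "N = y^2 + P" using yN P_def by simp
  have "int P = int N - int y^2" using yN P_def by (simp add: of_nat_diff)
  hence "int (2^(b+2)) dvd int P" using y(2) by simp
  hence dv: "2^(b+2) dvd P" by (simp only: int_dvd_int_iff)
  have "P \<le> 2^(2*(b+2)+1)"
  proof -
    have "P \<le> N" using P_def by simp
    also have "\<dots> \<le> 4^(b+2)" using Na b by simp
    also have "(4::nat)^(b+2) = 2^(2*(b+2))" by (simp add: power_mult)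
    also have "\<dots> \<le> 2^(2*(b+2)+1)" by (rule power_increasing) auto
    finally show ?thesis .
  qed
  hence "practical P" using prac_gen[OF _ dv] yN P_def by simp
  thus ?thesis using NP by blast
qed

lemma fam_mod: "p dvd (240240::nat) \<Longrightarrow> (240240*t + r) mod p = r mod p"
proof -
  assume "p dvd (240240::nat)"
  then obtain q where "240240 = p*q" by blast
  hence "240240*t + r = r + p*(q*t)" by (simp add: mult.assoc)
  thus ?thesis by (simp only: mod_mult_self2)
qed

lemma inf_fam:
  assumes r: "r = 8*k0 + j" and c16: "r mod 16 \<notin> {0,1,4,9}"
    and c3: "r mod 3 = 2" and c5: "r mod 5 = 2" and c7: "r mod 7 = 3" and c11: "r mod 11 = 10"
    and c13: "r mod 13 = 7"
  shows "infinite {k::nat. \<not> (\<exists>x P. practical P \<and> 8 * k + j = x\<^sup>2 + P)}"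
proof -
  let ?f = "\<lambda>t::nat. 30030*t + k0"
  have "inj ?f" by (intro injI) simp
  moreover have "range ?f \<subseteq> {k::nat. \<not> (\<exists>x P. practical P \<and> 8 * k + j = x\<^sup>2 + P)}"
  proof clarify
    fix t x P assume pr: "practical P" and eq: "8 * (30030*t + k0) + j = x^2 + P"
    let ?n = "240240*t + r"
    have n: "?n = x^2 + P" using eq r by simp
    show False
    proof (rule nonrep[OF pr n])
      show "?n mod 16 \<notin> {0,1,4,9}" using c16 fam_mod[of 16 t r] by simp
      show "?n mod 3 = 2" using c3 fam_mod[of 3 t r] by simp
      show "?n mod 5 = 2" using c5 fam_mod[of 5 t r] by simp
      show "?n mod 7 = 3" using c7 fam_mod[of 7 t r] by simp
      show "?n mod 11 = 10" using c11 fam_mod[of 11 t r] by simp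
      show "?n mod 13 = 7" using c13 fam_mod[of 13 t r] by simp
    qed
  qed
  ultimately show ?thesis using infinite_iff_countable_subset by blast
qed

theorem theorem3p3:
  shows "(\<forall>N::nat. N > 0 \<and> N mod 8 = 1 \<longrightarrow> (\<exists>x P. practical P \<and> N = x\<^sup>2 + P))
       \<and> (\<forall>j\<in>{0,2,3,4,5,6,7::nat}.
            infinite {k::nat. \<not> (\<exists>x P. practical P \<and> 8 * k + j = x\<^sup>2 + P)})"
proof
  show "\<forall>N::nat. N > 0 \<and> N mod 8 = 1 \<longrightarrow> (\<exists>x P. practical P \<and> N = x\<^sup>2 + P)"
    using part1 by blast
  have j0: "infinite {k::nat. \<not> (\<exists>x P. practical P \<and> 8 * k + 0 = x\<^sup>2 + P)}"
    by (rule inf_fam[of 191432 23929]) simp_all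
  have j2: "infinite {k::nat. \<not> (\<exists>x P. practical P \<and> 8 * k + 2 = x\<^sup>2 + P)}"
    by (rule inf_fam[of 41282 5160]) simp_all
  have j3: "infinite {k::nat. \<not> (\<exists>x P. practical P \<and> 8 * k + 3 = x\<^sup>2 + P)}"
    by (rule inf_fam[of 146387 18298]) simp_all
  have j4: "infinite {k::nat. \<not> (\<exists>x P. practical P \<and> 8 * k + 4 = x\<^sup>2 + P)}"
    by (rule inf_fam[of 131372 16421]) simp_all
  have j5: "infinite {k::nat. \<not> (\<exists>x P. practical P \<and> 8 * k + 5 = x\<^sup>2 + P)}"
    by (rule inf_fam[of 116357 14544]) simp_all
  have j6: "infinite {k::nat. \<not> (\<exists>x P. practical P \<and> 8 * k + 6 = x\<^sup>2 + P)}"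
    by (rule inf_fam[of 221462 27682]) simp_all
  have j7: "infinite {k::nat. \<not> (\<exists>x P. practical P \<and> 8 * k + 7 = x\<^sup>2 + P)}"
    by (rule inf_fam[of 86327 10790]) simp_all
  show "\<forall>j\<in>{0,2,3,4,5,6,7::nat}.
            infinite {k::nat. \<not> (\<exists>x P. practical P \<and> 8 * k + j = x\<^sup>2 + P)}"
    using j0 j2 j3 j4 j5 j6 j7 by auto
qed

end
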